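(* Let $1\le p<\infty$, let $K\subset\mathbb R^n$ be an origin-symmetric convex body, and let $f\in L^p(\mathbb R^n)$ satisfy $f=0$ a.e. outside $rK$ for some $r>0$. For $\lambda>0$ let $$H^+_{\lambda,K}=\left\{(x,y)\in\mathbb R^n\times\mathbb R^n:\ \|y\|_K>\|x\|_K,\ \frac{|f(x)-f(y)|}{\|x-y\|_K^{\frac np}}\ge\lambda\right\}.$$ Then for every $\lambda>0$, $$\frac{|K|}{\lambda^p}\|f\|^p_{L^p(\mathbb R^n)}-|K|^2r^{2n}\le\mathcal L^{2n}(H^+_{\lambda,K})\le\frac{|K|}{\lambda^p}\|f\|^p_{L^p(\mathbb R^n)}+|K|^2r^{2n},$$ and moreover $\mathcal L^{2n}(\widetilde E_{\lambda,K})=2\,\mathcal L^{2n}(H^+_{\lambda,K})$, where $\widetilde E_{\lambda,K}=\{(x,y): x\ne y,\ |f(x)-f(y)|\,\|x-y\|_K^{-n/p}\ge\lambda\}$.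
   Context: A convex body is a compact convex subset of $\mathbb R^n$ with non-empty interior; origin-symmetric means $K=-K$. $\|x\|_K=\inf\{\lambda\ge 0: x\in\lambda K\}$ is the Minkowski functional (a norm), $rK=\{rx:x\in K\}$, $|K|$ is the volume of $K$, and $\mathcal L^{2n}$ is Lebesgue measure on $\mathbb R^n\times\mathbb R^n$. *)

theory Defs
  imports "HOL-Analysis.Analysis"
begin

definition mink_norm :: "'a::real_normed_vector set \<Rightarrow> 'a \<Rightarrow> real" where
  "mink_norm K x = Inf {t. t \<ge> 0 \<and> x \<in> (\<lambda>z. t *\<^sub>R z) ` K}"

definition sym_convex_body :: "'a::euclidean_space set \<Rightarrow> bool" where
  "sym_convex_body K \<longleftrightarrow> compact K \<and> convex K \<and> interior K \<noteq> {} \<and> uminus ` K = K"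

end

theory Submission
  imports Defs
begin



lemma mink_mem_iff:
  fixes K :: "'a::euclidean_space set"
  assumes "0 \<in> K"
  shows "x \<in> (\<lambda>z. t *\<^sub>R z) ` K \<longleftrightarrow> (t = 0 \<and> x = 0) \<or> (t \<noteq> 0 \<and> x /\<^sub>R t \<in> K)"
proof (cases "t = 0")
  case True then show ?thesis using assms by auto
next
  case False
  show ?thesis
  proof
    assume "x \<in> (\<lambda>z. t *\<^sub>R z) ` K" then show "(t = 0 \<and> x = 0) \<or> (t \<noteq> 0 \<and> x /\<^sub>R t \<in> K)"
      using False by auto
  next
    assume "(t = 0 \<and> x = 0) \<or> (t \<noteq> 0 \<and> x /\<^sub>R t \<in> K)"
    then have "x /\<^sub>R t \<in> K" using False by auto
    moreover have "x = t *\<^sub>R (x /\<^sub>R t)" using False by simp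
    ultimately show "x \<in> (\<lambda>z. t *\<^sub>R z) ` K" by blast
  qed
qed

locale cbody =
  fixes K :: "'a::euclidean_space set" and \<delta> R :: real
  assumes cpt: "compact K" and cvx: "convex K" and dpos: "\<delta> > 0" and Rpos: "R > 0"
    and cb: "cball 0 \<delta> \<subseteq> K" and bnd: "K \<subseteq> cball 0 R"
begin

abbreviation "N \<equiv> mink_norm K"

lemma zeroK: "0 \<in> K" using cb dpos by auto

lemma T_ne: "{t. t \<ge> 0 \<and> x \<in> (\<lambda>z. t *\<^sub>R z) ` K} \<noteq> {}"
proof (cases "x = 0")
  case True then show ?thesis using zeroK by (auto intro!: exI[of _ 0])
next
  case False
  let ?t = "norm x / \<delta>"
  have t: "?t > 0" using False dpos by simp
  have "norm (x /\<^sub>R ?t) = \<delta>" using False dpos by simp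
  then have "x /\<^sub>R ?t \<in> K" using cb by auto
  then show ?thesis using t mink_mem_iff[OF zeroK, of x ?t] by (auto intro!: exI[of _ ?t])
qed

lemma N_ge0: "N x \<ge> 0"
  unfolding mink_norm_def using T_ne by (auto intro!: cInf_greatest)

lemma N_le: "t \<ge> 0 \<Longrightarrow> x \<in> (\<lambda>z. t *\<^sub>R z) ` K \<Longrightarrow> N x \<le> t"
  unfolding mink_norm_def by (rule cInf_lower) (auto intro: bdd_belowI[of _ 0])

lemma N0: "N 0 = 0"
  using N_le[of 0 0] N_ge0[of 0] zeroK by auto

lemma scale_in: "y \<in> K \<Longrightarrow> 0 \<le> u \<Longrightarrow> u \<le> 1 \<Longrightarrow> u *\<^sub>R y \<in> K"
  using convexD[OF cvx, of y 0 u "1-u"] zeroK by auto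

lemma N_le_iff: assumes t: "t > 0" shows "N x \<le> t \<longleftrightarrow> x /\<^sub>R t \<in> K"
proof
  assume "x /\<^sub>R t \<in> K" then show "N x \<le> t"
    using t N_le[of t x] mink_mem_iff[OF zeroK, of x t] by auto
next
  assume le: "N x \<le> t"
  have big: "x /\<^sub>R s \<in> K" if s: "s > t" for s
  proof -
    have "N x < s" using le s by simp
    have bdd: "bdd_below {t. t \<ge> 0 \<and> x \<in> (\<lambda>z. t *\<^sub>R z) ` K}" by (auto intro: bdd_belowI[of _ 0])
    have "\<exists>s'\<in>{t. t \<ge> 0 \<and> x \<in> (\<lambda>z. t *\<^sub>R z) ` K}. s' < s"
      using \<open>N x < s\<close> unfolding mink_norm_def using cInf_less_iff[OF T_ne bdd] by blast
    then obtain s' where s': "s' \<in> {t. t \<ge> 0 \<and> x \<in> (\<lambda>z. t *\<^sub>R z) ` K}" "s' < s" by blast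
    show ?thesis
    proof (cases "s' = 0")
      case True then have "x = 0" using s' by auto
      then show ?thesis using zeroK by simp
    next
      case False
      then have "x /\<^sub>R s' \<in> K" using s' mink_mem_iff[OF zeroK, of x s'] by auto
      moreover have "x /\<^sub>R s = (s' / s) *\<^sub>R (x /\<^sub>R s')" using False s t by (auto simp: divide_inverse_commute)
      ultimately show ?thesis using scale_in[of "x /\<^sub>R s'" "s'/s"] s' s t False by auto
    qed
  qed
  have lim: "(\<lambda>k. x /\<^sub>R (t + 1 / real (Suc k))) \<longlonglongrightarrow> x /\<^sub>R t"
  proof -
    have "(\<lambda>k. t + 1 / real (Suc k)) \<longlonglongrightarrow> t + 0"
      using LIMSEQ_inverse_real_of_nat by (intro tendsto_add tendsto_const) (simp add: inverse_eq_divide)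
    then show ?thesis using t by (intro tendsto_intros) auto
  qed
  have "\<forall>k. x /\<^sub>R (t + 1 / real (Suc k)) \<in> K" using big by auto
  then show "x /\<^sub>R t \<in> K"
    using closed_sequentially[OF compact_imp_closed[OF cpt] _ lim] by blast
qed

lemma N_le_iff': "t > 0 \<Longrightarrow> N x \<le> t \<longleftrightarrow> x \<in> (\<lambda>z. t *\<^sub>R z) ` K"
  using N_le_iff mink_mem_iff[OF zeroK] by auto

lemma N_pos: assumes "x \<noteq> 0" shows "N x > 0"
proof (rule ccontr)
  assume "\<not> N x > 0"
  then have "N x \<le> norm x / (2*R)" using N_ge0[of x] assms Rpos by (smt (verit) divide_pos_pos zero_less_norm_iff)
  then have "x /\<^sub>R (norm x / (2*R)) \<in> K" using N_le_iff[of "norm x / (2*R)"] assms Rpos by auto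
  then have "norm (x /\<^sub>R (norm x / (2*R))) \<le> R" using bnd by auto
  then show False using assms Rpos by simp
qed

lemma N_zero_iff: "N x = 0 \<longleftrightarrow> x = 0"
  using N_pos N0 by fastforce

lemma N_le_0_iff: "N x \<le> 0 \<longleftrightarrow> x = 0"
  using N_pos[of x] N0 N_ge0[of x] by force

lemma N_neg: assumes sym: "uminus ` K = K" shows "N (- x) = N x"
proof -
  have "(- x) \<in> (\<lambda>z. t *\<^sub>R z) ` K \<longleftrightarrow> x \<in> (\<lambda>z. t *\<^sub>R z) ` K" for t
  proof -
    have "(- x) \<in> (\<lambda>z. t *\<^sub>R z) ` K \<longleftrightarrow> x \<in> (\<lambda>z. t *\<^sub>R z) ` (uminus ` K)"
      by (auto simp: image_iff) (metis scaleR_minus_right minus_minus)+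
    then show ?thesis using sym by simp
  qed
  then show ?thesis unfolding mink_norm_def by simp
qed

lemma N_borel[measurable]: "N \<in> borel_measurable borel"
proof -
  have "{w. N w \<le> a} \<in> sets borel" for a
  proof -
    consider "a < 0" | "a = 0" | "a > 0" by linarith
    then show ?thesis
    proof cases
      case 1 then have "{w. N w \<le> a} = {}" using N_ge0 by (auto simp: not_le intro: order.strict_trans2)
      then show ?thesis by simp
    next
      case 2 then have "{w. N w \<le> a} = {0}" using N_le_0_iff by auto
      then show ?thesis by simp
    next
      case 3 then have "{w. N w \<le> a} = (\<lambda>z. a *\<^sub>R z) ` K" using N_le_iff' by auto
      moreover have "compact ((\<lambda>z. a *\<^sub>R z) ` K)"
        by (rule compact_continuous_image) (auto intro!: continuous_intros cpt)
      ultimately show ?thesis by (simp add: borel_compact)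
    qed
  qed
  then show ?thesis by (simp add: borel_measurable_iff_le)
qed

end



lemma pow_aux: "(c::real)^n * k - (s*c)^n * k = c^n * k * (1 - s^n)"
  by (simp add: power_mult_distrib right_diff_distrib)

context cbody begin

abbreviation "kap \<equiv> measure lborel K"

lemma K_borel[measurable]: "K \<in> sets borel" using cpt by (simp add: borel_compact)

lemma K_fin: "emeasure lborel K = ennreal kap"
  using emeasure_compact_finite[OF cpt] by (simp add: emeasure_eq_ennreal_measure)

lemma kap_nn: "kap \<ge> 0" by simp

lemma kap_leb: "measure lebesgue K = kap"
  by (simp add: measure_def)

lemma affine_meas: assumes "c \<noteq> 0"
  shows "emeasure lborel ((\<lambda>z. c *\<^sub>R z + x) ` K) = ennreal (\<bar>c\<bar> ^ DIM('a) * kap)"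
proof -
  have Sb: "(\<lambda>z. c *\<^sub>R z + x) ` K \<in> sets borel"
    by (intro borel_compact compact_continuous_image cpt) (auto intro!: continuous_intros)
  have "emeasure lebesgue ((\<lambda>z. c *\<^sub>R z + x) ` K) = \<bar>c\<bar> ^ DIM('a) * emeasure lebesgue K"
    by (rule emeasure_lebesgue_affine)
  then show ?thesis using Sb K_fin by (simp add: ennreal_mult ennreal_power)
qed

lemma sub_meas: assumes t: "t > 0" shows "emeasure lborel {y. N y \<le> t} = ennreal (t ^ DIM('a) * kap)"
proof -
  have "{y. N y \<le> t} = (\<lambda>z. t *\<^sub>R z + 0) ` K" using N_le_iff'[OF t] by auto
  then show ?thesis using affine_meas[of t 0] t by simp
qed

lemma ball_meas: assumes t: "t \<ge> 0" shows "emeasure lborel {y. N (x - y) \<le> t} = ennreal (t ^ DIM('a) * kap)"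
proof (cases "t = 0")
  case True
  then have "{y. N (x - y) \<le> t} = {x}" using N_le_0_iff by auto
  then show ?thesis using True by simp
next
  case False
  then have t: "t > 0" using t by simp
  have "{y. N (x - y) \<le> t} = (\<lambda>z. (-t) *\<^sub>R z + x) ` K"
  proof -
    have "N (x - y) \<le> t \<longleftrightarrow> y \<in> (\<lambda>z. (-t) *\<^sub>R z + x) ` K" for y
    proof -
      have "N (x - y) \<le> t \<longleftrightarrow> (x - y) /\<^sub>R t \<in> K" by (rule N_le_iff[OF t])
      also have "\<dots> \<longleftrightarrow> y \<in> (\<lambda>z. (-t) *\<^sub>R z + x) ` K"
      proof
        assume "(x - y) /\<^sub>R t \<in> K"
        moreover have "y = (-t) *\<^sub>R ((x - y) /\<^sub>R t) + x" using t by (simp add: algebra_simps)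
        ultimately show "y \<in> (\<lambda>z. (-t) *\<^sub>R z + x) ` K" by blast
      next
        assume "y \<in> (\<lambda>z. (-t) *\<^sub>R z + x) ` K"
        then obtain z where "z \<in> K" "y = (-t) *\<^sub>R z + x" by blast
        then show "(x - y) /\<^sub>R t \<in> K" using t by simp
      qed
      finally show ?thesis .
    qed
    then show ?thesis by auto
  qed
  then show ?thesis using affine_meas[of "-t" x] t by simp
qed

lemma level_null: assumes c: "c \<ge> 0" shows "emeasure lborel {y. N y = c} = 0"
proof (cases "c = 0")
  case True
  then have "{y. N y = c} = {0}" using N_zero_iff by auto
  then show ?thesis by simp
next
  case False
  then have c: "c > 0" using c by simp
  let ?n = "DIM('a)"
  let ?S = "{y. N y = c}"
  have S_fin: "emeasure lborel ?S \<le> emeasure lborel {y. N y \<le> c}"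
    by (intro emeasure_mono) auto
  have bound: "measure lborel ?S \<le> c^?n * kap * (real ?n * h)" if h: "0 < h" "h < 1" for h
  proof -
    let ?s = "1 - h"
    have s: "0 < ?s" "?s < 1" using h by auto
    have sc: "?s * c > 0" using s c by simp
    have lt: "?s * c < c" using s c by simp
    have "?S \<subseteq> {y. N y \<le> c} - {y. N y \<le> ?s * c}" using lt by auto
    then have "emeasure lborel ?S \<le> emeasure lborel ({y. N y \<le> c} - {y. N y \<le> ?s * c})"
      by (intro emeasure_mono) auto
    also have "\<dots> = emeasure lborel {y. N y \<le> c} - emeasure lborel {y. N y \<le> ?s * c}"
      using s c sc by (intro emeasure_Diff) (auto simp: sub_meas intro: order_trans[OF _ mult_left_le_one_le])
    also have "\<dots> = ennreal (c^?n * kap - (?s*c)^?n * kap)"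
    proof -
      have q: "0 \<le> (?s*c)^?n * kap" using sc by simp
      show ?thesis using sub_meas[OF c] sub_meas[OF sc] by (simp add: ennreal_minus[OF q])
    qed
    finally have le: "emeasure lborel ?S \<le> ennreal (c^?n * kap - (?s*c)^?n * kap)" .
    have "1 - real ?n * h \<le> ?s ^ ?n" using Bernoulli_inequality[of "-h" ?n] h by simp
    then have "c^?n * kap - (?s*c)^?n * kap \<le> c^?n * kap * (real ?n * h)"
    proof -
      assume a: "1 - real ?n * h \<le> ?s ^ ?n"
      have "c^?n * kap - (?s*c)^?n * kap = c^?n * kap * (1 - ?s^?n)" by (rule pow_aux[of c "DIM('a)" kap "1 - h"])
      also have "\<dots> \<le> c^?n * kap * (real ?n * h)"
        using a c by (intro mult_left_mono) auto
      finally show ?thesis .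
    qed
    then have "ennreal (c^?n * kap - (?s*c)^?n * kap) \<le> ennreal (c^?n * kap * (real ?n * h))"
      by (rule ennreal_leI)
    then have le2: "emeasure lborel ?S \<le> ennreal (c^?n * kap * (real ?n * h))"
      by (rule order_trans[OF le])
    have nn: "0 \<le> c^?n * kap * (real ?n * h)" using h c by simp
    show ?thesis unfolding measure_def[of lborel ?S] by (rule enn2real_leI[OF nn le2])
  qed
  have "measure lborel ?S \<le> 0"
  proof (rule field_le_epsilon)
    fix e :: real assume e: "e > 0"
    let ?C = "c^?n * kap * real ?n"
    have C: "?C \<ge> 0" using c by simp
    let ?h = "min (1/2) (e / (?C + 1))"
    have h: "0 < ?h" "?h < 1" using e C by auto
    have "measure lborel ?S \<le> ?C * ?h" using bound[OF h] by (simp only: mult.assoc)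
    also have "\<dots> \<le> ?C * (e / (?C + 1))" using C by (intro mult_left_mono) auto
    also have "\<dots> = e * (?C / (?C + 1))" by simp
    also have "\<dots> \<le> e" using C e by (intro mult_right_le_one_le) auto
    finally show "measure lborel ?S \<le> 0 + e" by simp
  qed
  moreover have "emeasure lborel ?S < \<infinity>" using S_fin sub_meas[OF c] by (simp add: order_le_less_trans)
  ultimately have "measure lborel ?S = 0" using measure_nonneg[of lborel ?S] by linarith
  then show ?thesis using emeasure_eq_ennreal_measure[of lborel ?S] \<open>emeasure lborel ?S < \<infinity>\<close> by simp
qed

end



lemma cond_iff:
  fixes m q lam a :: real
  assumes m: "m > 0" and lam: "lam > 0" and q: "q \<ge> 0" and a: "a > 0"
  shows "lam \<le> q / m powr a \<longleftrightarrow> m \<le> (q / lam) powr (1 / a)"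
proof -
  have ma: "m powr a > 0" using m by simp
  have "lam \<le> q / m powr a \<longleftrightarrow> lam * m powr a \<le> q" using ma by (simp add: pos_le_divide_eq)
  also have "\<dots> \<longleftrightarrow> m powr a \<le> q / lam" using lam by (simp add: pos_le_divide_eq mult.commute)
  also have "\<dots> \<longleftrightarrow> m \<le> (q / lam) powr (1 / a)"
  proof
    assume h: "m powr a \<le> q / lam"
    have "m = (m powr a) powr (1/a)" using m a by (simp add: powr_powr)
    also have "\<dots> \<le> (q / lam) powr (1/a)" using h a ma by (intro powr_mono2) auto
    finally show "m \<le> (q / lam) powr (1 / a)" .
  next
    assume h: "m \<le> (q / lam) powr (1 / a)"
    have "m powr a \<le> ((q / lam) powr (1 / a)) powr a" using h a m by (intro powr_mono2) auto
    also have "\<dots> = q / lam" using a q lam by (simp add: powr_powr)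
    finally show "m powr a \<le> q / lam" .
  qed
  finally show ?thesis .
qed

locale msetup = cbody K \<delta> R for K :: "'a::euclidean_space set" and \<delta> R +
  fixes g :: "'a \<Rightarrow> real" and r p lam aa :: real
  assumes sym: "uminus ` K = K"
    and g_meas[measurable]: "g \<in> borel_measurable borel"
    and r: "r > 0" and p: "p \<ge> 1" and lam: "lam > 0"
    and g_out: "\<And>x. N x > r \<Longrightarrow> g x = 0"
    and aa_def: "aa = real DIM('a) / p"
    and g_int: "integrable lborel (\<lambda>x. \<bar>g x\<bar> powr p)"
begin


lemma a_pos: "aa > 0" using p aa_def by simp

definition "cnd x y \<longleftrightarrow> lam \<le> \<bar>g x - g y\<bar> / N (x - y) powr aa"

definition "H = {(x, y). N x < N y \<and> cnd x y}"
definition "H' = {(x, y). N y < N x \<and> cnd x y}"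
definition "E = {(x, y). cnd x y}"

lemma pair_set_meas:
  fixes P :: "'a \<Rightarrow> 'a \<Rightarrow> bool"
  assumes "Measurable.pred (lborel \<Otimes>\<^sub>M lborel) (\<lambda>z. P (fst z) (snd z))"
  shows "{(x, y). P x y} \<in> sets (lborel \<Otimes>\<^sub>M lborel)"
proof -
  have "{(x, y). P x y} = {z \<in> space (lborel \<Otimes>\<^sub>M lborel). P (fst z) (snd z)}"
    by (auto simp: space_pair_measure)
  also have "\<dots> \<in> sets (lborel \<Otimes>\<^sub>M lborel)" using assms by measurable
  finally show ?thesis .
qed

lemma H_meas[measurable]: "H \<in> sets (lborel \<Otimes>\<^sub>M lborel)"
  unfolding H_def cnd_def by (rule pair_set_meas) measurable
lemma H'_meas[measurable]: "H' \<in> sets (lborel \<Otimes>\<^sub>M lborel)"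
  unfolding H'_def cnd_def by (rule pair_set_meas) measurable
lemma E_meas[measurable]: "E \<in> sets (lborel \<Otimes>\<^sub>M lborel)"
  unfolding E_def cnd_def by (rule pair_set_meas) measurable

definition "C x = {y. lam \<le> \<bar>g x\<bar> / N (x - y) powr aa}"

lemma C_eq: "C x = {y. N (x - y) \<le> (\<bar>g x\<bar> / lam) powr (1 / aa)} - {x}"
proof -
  have "y \<in> C x \<longleftrightarrow> y \<in> {y. N (x - y) \<le> (\<bar>g x\<bar> / lam) powr (1 / aa)} - {x}" for y
  proof (cases "y = x")
    case True then show ?thesis using lam by (simp add: C_def N0)
  next
    case False
    then have "N (x - y) > 0" using N_pos by simp
    then show ?thesis using cond_iff[of "N (x - y)" lam "\<bar>g x\<bar>" aa] lam a_pos False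
      by (simp add: C_def)
  qed
  then show ?thesis by blast
qed

lemma C_meas: "emeasure lborel (C x) = ennreal (kap * (\<bar>g x\<bar> powr p / lam powr p))"
proof -
  let ?q = "\<bar>g x\<bar> / lam"
  have "emeasure lborel (C x) = emeasure lborel {y. N (x - y) \<le> ?q powr (1 / aa)}"
    unfolding C_eq by (rule emeasure_Diff_null_set) auto
  also have "\<dots> = ennreal ((?q powr (1 / aa)) ^ DIM('a) * kap)"
    by (rule ball_meas) simp
  also have "(?q powr (1 / aa)) ^ DIM('a) = \<bar>g x\<bar> powr p / lam powr p"
  proof (cases "g x = 0")
    case True then show ?thesis by simp
  next
    case False
    then have q: "?q > 0" using lam by simp
    have "(?q powr (1 / aa)) ^ DIM('a) = (?q powr (1 / aa)) powr (real DIM('a))"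
      by (rule powr_realpow[symmetric]) (use q lam False in simp)
    also have "\<dots> = ?q powr p" using p aa_def by (simp add: powr_powr)
    finally show ?thesis by (simp add: powr_divide)
  qed
  finally show ?thesis by (simp add: mult.commute)
qed

lemma sec_out: "N x > r \<Longrightarrow> Pair x -` H = {}"
  using g_out lam unfolding H_def cnd_def by auto

lemma sec_sub: "N x \<le> r \<Longrightarrow> Pair x -` H \<subseteq> {y. N y \<le> r} \<union> C x"
proof
  fix y assume y: "y \<in> Pair x -` H"
  show "y \<in> {y. N y \<le> r} \<union> C x"
  proof (cases "N y \<le> r")
    case False then have "g y = 0" using g_out by simp
    then show ?thesis using y unfolding H_def cnd_def C_def by auto
  qed simp
qed

lemma C_sub: assumes x: "N x \<le> r" shows "C x \<subseteq> Pair x -` H \<union> {y. N y \<le> r}"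
proof
  fix y assume y: "y \<in> C x"
  show "y \<in> Pair x -` H \<union> {y. N y \<le> r}"
  proof (cases "N y \<le> r")
    case False then have "g y = 0" using g_out by simp
    then show ?thesis using y x False unfolding H_def cnd_def C_def by auto
  qed simp
qed

lemma rball_meas: "emeasure lborel {y. N y \<le> r} = ennreal (r ^ DIM('a) * kap)"
  using sub_meas[OF r] .

abbreviation "I \<equiv> (\<integral>x. \<bar>g x\<bar> powr p \<partial>lborel)"
abbreviation "B \<equiv> r ^ DIM('a) * kap"
abbreviation "cc \<equiv> kap / lam powr p"

lemma B_nn: "B \<ge> 0" using r by simp

lemma G_int: "(\<integral>\<^sup>+x. ennreal (kap * (\<bar>g x\<bar> powr p / lam powr p)) \<partial>lborel) = ennreal (cc * I)"
proof -
  have eq: "(\<lambda>x. kap * (\<bar>g x\<bar> powr p / lam powr p)) = (\<lambda>x. cc * \<bar>g x\<bar> powr p)" by auto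
  have "(\<integral>\<^sup>+x. ennreal (cc * \<bar>g x\<bar> powr p) \<partial>lborel) = ennreal (\<integral>x. cc * \<bar>g x\<bar> powr p \<partial>lborel)"
    by (rule nn_integral_eq_integral) (use g_int in auto)
  also have "(\<integral>x. cc * \<bar>g x\<bar> powr p \<partial>lborel) = cc * I" by (rule integral_mult_right_zero)
  finally have "(\<integral>\<^sup>+x. ennreal (cc * \<bar>g x\<bar> powr p) \<partial>lborel) = ennreal (cc * I)" .
  moreover have "(\<integral>\<^sup>+x. ennreal (kap * (\<bar>g x\<bar> powr p / lam powr p)) \<partial>lborel) = (\<integral>\<^sup>+x. ennreal (cc * \<bar>g x\<bar> powr p) \<partial>lborel)"
    by (rule nn_integral_cong) simp
  ultimately show ?thesis by simp
qed

lemma ind_int: "(\<integral>\<^sup>+x. indicator {y. N y \<le> r} x * ennreal B \<partial>lborel) = ennreal (B * B)"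
  using rball_meas B_nn by (simp add: nn_integral_multc ennreal_mult)

lemma sec_meas[measurable]: "(\<lambda>x. emeasure lborel (Pair x -` H)) \<in> borel_measurable lborel"
  by (rule lborel.measurable_emeasure_Pair) (rule H_meas)

lemma H_alt: "emeasure lborel H = (\<integral>\<^sup>+x. emeasure lborel (Pair x -` H) \<partial>lborel)"
proof -
  have "emeasure (lborel \<Otimes>\<^sub>M lborel) H = (\<integral>\<^sup>+x. emeasure lborel (Pair x -` H) \<partial>lborel)"
    by (rule lborel.emeasure_pair_measure_alt) (rule H_meas)
  then show ?thesis by (simp add: lborel_prod)
qed

lemma H_upper: "emeasure lborel H \<le> ennreal (cc * I + B * B)"
proof -
  have pt: "emeasure lborel (Pair x -` H) \<le> indicator {y. N y \<le> r} x * ennreal B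
              + ennreal (kap * (\<bar>g x\<bar> powr p / lam powr p))" for x
  proof (cases "N x \<le> r")
    case True
    have "emeasure lborel (Pair x -` H) \<le> emeasure lborel ({y. N y \<le> r} \<union> C x)"
      using sec_sub[OF True] by (intro emeasure_mono) (auto simp: C_def)
    also have "\<dots> \<le> emeasure lborel {y. N y \<le> r} + emeasure lborel (C x)"
      by (rule emeasure_subadditive) (auto simp: C_def)
    finally show ?thesis using True by (simp add: rball_meas C_meas)
  next
    case False then show ?thesis using sec_out by simp
  qed
  have "emeasure lborel H \<le> (\<integral>\<^sup>+x. indicator {y. N y \<le> r} x * ennreal B
              + ennreal (kap * (\<bar>g x\<bar> powr p / lam powr p)) \<partial>lborel)"
    unfolding H_alt by (intro nn_integral_mono pt)
  also have "\<dots> = (\<integral>\<^sup>+x. indicator {y. N y \<le> r} x * ennreal B \<partial>lborel)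
              + (\<integral>\<^sup>+x. ennreal (kap * (\<bar>g x\<bar> powr p / lam powr p)) \<partial>lborel)"
    by (rule nn_integral_add) auto
  also have "\<dots> = ennreal (B * B) + ennreal (cc * I)"
    by (simp only: ind_int G_int)
  finally show ?thesis
    using B_nn by (simp add: ennreal_plus[symmetric] add.commute mult_nonneg_nonneg del: ennreal_plus)
qed

lemma H_lower: "ennreal (cc * I - B * B) \<le> emeasure lborel H"
proof -
  have pt: "ennreal (kap * (\<bar>g x\<bar> powr p / lam powr p)) \<le> emeasure lborel (Pair x -` H)
              + indicator {y. N y \<le> r} x * ennreal B" for x
  proof (cases "N x \<le> r")
    case True
    have "emeasure lborel (C x) \<le> emeasure lborel (Pair x -` H \<union> {y. N y \<le> r})"
      using C_sub[OF True] by (intro emeasure_mono) (auto simp: H_def cnd_def)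
    also have "\<dots> \<le> emeasure lborel (Pair x -` H) + emeasure lborel {y. N y \<le> r}"
      by (rule emeasure_subadditive) (auto simp: H_def cnd_def)
    finally show ?thesis using True by (simp add: rball_meas C_meas)
  next
    case False then show ?thesis using g_out by simp
  qed
  have "ennreal (cc * I) \<le> (\<integral>\<^sup>+x. emeasure lborel (Pair x -` H)
              + indicator {y. N y \<le> r} x * ennreal B \<partial>lborel)"
    unfolding G_int[symmetric] by (intro nn_integral_mono pt)
  also have "\<dots> = (\<integral>\<^sup>+x. emeasure lborel (Pair x -` H) \<partial>lborel)
              + (\<integral>\<^sup>+x. indicator {y. N y \<le> r} x * ennreal B \<partial>lborel)"
    by (rule nn_integral_add) auto
  also have "\<dots> = emeasure lborel H + ennreal (B * B)"
    by (simp only: ind_int H_alt)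
  finally have le: "ennreal (cc * I) \<le> emeasure lborel H + ennreal (B * B)" .
  have "ennreal (cc * I - B * B) = ennreal (cc * I) - ennreal (B * B)"
    using B_nn by (simp add: ennreal_minus)
  also have "\<dots> \<le> emeasure lborel H"
    using le by (simp add: ennreal_minus_le_iff add.commute)
  finally show ?thesis .
qed

end



context msetup begin

lemma cnd_sym: "cnd y x = cnd x y"
proof -
  have "N (y - x) = N (x - y)" using N_neg[OF sym, of "x - y"] by simp
  then show ?thesis unfolding cnd_def by (simp add: abs_minus_commute)
qed

lemma D0_null: "{(x, y). N x = N y} \<in> null_sets (lborel \<Otimes>\<^sub>M lborel)"
proof -
  have m: "{(x, y). N x = N y} \<in> sets (lborel \<Otimes>\<^sub>M lborel)"
    by (rule pair_set_meas) measurable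
  have "emeasure (lborel \<Otimes>\<^sub>M lborel) {(x, y). N x = N y} = (\<integral>\<^sup>+x. emeasure lborel (Pair x -` {(x, y). N x = N y}) \<partial>lborel)"
    by (rule lborel.emeasure_pair_measure_alt) (rule m)
  also have "\<dots> = (\<integral>\<^sup>+x. 0 \<partial>lborel)"
  proof -
    have "emeasure lborel (Pair x -` {(x, y). N x = N y}) = 0" for x
    proof -
      have "Pair x -` {(x, y). N x = N y} = {y. N y = N x}" by auto
      then show ?thesis using level_null[OF N_ge0] by simp
    qed
    then show ?thesis by simp
  qed
  finally show ?thesis using m by (simp add: null_sets_def)
qed

lemma H'_eq_H: "emeasure (lborel \<Otimes>\<^sub>M lborel) H' = emeasure (lborel \<Otimes>\<^sub>M lborel) H"
proof -
  have "emeasure (lborel \<Otimes>\<^sub>M lborel) H = emeasure (distr (lborel \<Otimes>\<^sub>M lborel) (lborel \<Otimes>\<^sub>M lborel) (\<lambda>(x, y). (y, x))) H"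
    by (subst lborel_pair.distr_pair_swap[symmetric]) simp
  also have "\<dots> = emeasure (lborel \<Otimes>\<^sub>M lborel) ((\<lambda>(x, y). (y, x)) -` H \<inter> space (lborel \<Otimes>\<^sub>M lborel))"
    by (rule emeasure_distr) (auto intro: measurable_pair_swap' simp del: sets_lborel)
  also have "(\<lambda>(x, y). (y, x)) -` H \<inter> space (lborel \<Otimes>\<^sub>M lborel) = H'"
    unfolding H_def H'_def by (auto simp: space_pair_measure cnd_sym)
  finally show ?thesis by simp
qed

lemma E_2H: "emeasure (lborel \<Otimes>\<^sub>M lborel) E = 2 * emeasure (lborel \<Otimes>\<^sub>M lborel) H"
proof -
  let ?M = "lborel \<Otimes>\<^sub>M lborel"
  have "AE z in ?M. z \<notin> {(x, y). N x = N y}" by (rule AE_not_in[OF D0_null])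
  then have ae: "AE z in ?M. z \<in> E \<longleftrightarrow> z \<in> H \<union> H'"
    by eventually_elim (auto simp: E_def H_def H'_def)
  have "emeasure ?M E = emeasure ?M (H \<union> H')"
    by (rule emeasure_eq_AE[OF ae]) (use E_meas H_meas H'_meas in auto)
  also have "\<dots> = emeasure ?M H + emeasure ?M H'"
  proof -
    have "H \<inter> H' = {}" by (auto simp: H_def H'_def)
    then show ?thesis by (rule plus_emeasure[symmetric, OF H_meas H'_meas])
  qed
  also have "\<dots> = 2 * emeasure ?M H" using H'_eq_H by (simp add: mult_2)
  finally show ?thesis .
qed

end



lemma transfer_meas:
  fixes S T :: "('a::euclidean_space \<times> 'a) set" and Z :: "('a \<times> 'a) set"
  assumes S: "S \<in> sets (lborel \<Otimes>\<^sub>M lborel)" and Z: "Z \<in> null_sets (lborel \<Otimes>\<^sub>M lborel)"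
    and eq: "\<And>z. z \<notin> Z \<Longrightarrow> z \<in> T \<longleftrightarrow> z \<in> S"
  shows "emeasure (lebesgue :: ('a \<times> 'a) measure) T = emeasure (lborel \<Otimes>\<^sub>M lborel) S"
proof -
  have S': "S \<in> sets (lborel :: ('a \<times> 'a) measure)" using S unfolding lborel_prod .
  have Z': "Z \<in> null_sets (lborel :: ('a \<times> 'a) measure)" using Z unfolding lborel_prod .
  have T: "T \<in> sets (lebesgue :: ('a \<times> 'a) measure)"
  proof (rule sets_completionI)
    show "T = (S - Z) \<union> (T \<inter> Z)" using eq by blast
    show "T \<inter> Z \<subseteq> Z" by blast
    show "Z \<in> null_sets lborel" by (rule Z')
    show "S - Z \<in> sets lborel" using S' Z' by auto
  qed
  have "AE z in (lborel :: ('a \<times> 'a) measure). z \<notin> Z" by (rule AE_not_in[OF Z'])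
  then have "AE z in (lborel :: ('a \<times> 'a) measure). z \<in> T \<longleftrightarrow> z \<in> S"
    by eventually_elim (use eq in auto)
  then have ae: "AE z in (lebesgue :: ('a \<times> 'a) measure). z \<in> T \<longleftrightarrow> z \<in> S"
    by (simp add: AE_completion_iff)
  have "emeasure (lebesgue :: ('a \<times> 'a) measure) T = emeasure lebesgue S"
    by (rule emeasure_eq_AE[OF ae T]) (use S' in auto)
  also have "\<dots> = emeasure lborel S" using S' by simp
  finally show ?thesis by (simp add: lborel_prod)
qed

theorem mainTheorem5:
  fixes K :: "'a::euclidean_space set" and f :: "'a \<Rightarrow> real"
    and p r lam :: real
  assumes p: "1 \<le> p"
    and K: "sym_convex_body K"
    and f_meas: "f \<in> borel_measurable lebesgue"
    and f_Lp: "integrable lebesgue (\<lambda>x. \<bar>f x\<bar> powr p)"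
    and r: "r > 0"
    and supp: "AE x in lebesgue. x \<notin> (\<lambda>z. r *\<^sub>R z) ` K \<longrightarrow> f x = 0"
    and lam: "lam > 0"
  shows "ennreal (measure lebesgue K / lam powr p * (\<integral>x. \<bar>f x\<bar> powr p \<partial>lebesgue)
              - (measure lebesgue K)\<^sup>2 * r ^ (2 * DIM('a)))
           \<le> emeasure (lebesgue :: ('a \<times> 'a) measure)
               {(x, y). mink_norm K y > mink_norm K x \<and>
                  \<bar>f x - f y\<bar> / mink_norm K (x - y) powr (real DIM('a) / p) \<ge> lam}
       \<and> emeasure (lebesgue :: ('a \<times> 'a) measure)
               {(x, y). mink_norm K y > mink_norm K x \<and>
                  \<bar>f x - f y\<bar> / mink_norm K (x - y) powr (real DIM('a) / p) \<ge> lam}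
           \<le> ennreal (measure lebesgue K / lam powr p * (\<integral>x. \<bar>f x\<bar> powr p \<partial>lebesgue)
              + (measure lebesgue K)\<^sup>2 * r ^ (2 * DIM('a)))
       \<and> emeasure (lebesgue :: ('a \<times> 'a) measure)
               {(x, y). x \<noteq> y \<and>
                  \<bar>f x - f y\<bar> * mink_norm K (x - y) powr (- (real DIM('a) / p)) \<ge> lam}
         = 2 * emeasure (lebesgue :: ('a \<times> 'a) measure)
               {(x, y). mink_norm K y > mink_norm K x \<and>
                  \<bar>f x - f y\<bar> / mink_norm K (x - y) powr (real DIM('a) / p) \<ge> lam}"
proof -
  have cK: "compact K" and cvK: "convex K" and iK: "interior K \<noteq> {}" and sK: "uminus ` K = K"
    using K by (auto simp: sym_convex_body_def)
  obtain a where a: "a \<in> interior K" using iK by blast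
  have "- a \<in> interior K" using a interior_negations[of K] sK by auto
  then have "(1/2) *\<^sub>R a + (1/2) *\<^sub>R (- a) \<in> interior K"
    using a convex_interior[OF cvK] by (intro convexD) auto
  then have "0 \<in> interior K" by simp
  then obtain \<delta> where d: "\<delta> > 0" "cball 0 \<delta> \<subseteq> K" using mem_interior_cball by blast
  obtain R where R: "R > 0" "\<forall>x\<in>K. norm x \<le> R"
    using compact_imp_bounded[OF cK] bounded_pos by blast
  interpret cb: cbody K \<delta> R
    using cK cvK d R by unfold_locales auto
  let ?N = "mink_norm K"
  have rK: "(\<lambda>z. r *\<^sub>R z) ` K = {x. ?N x \<le> r}" using cb.N_le_iff'[OF r] by auto
  define f' where "f' x = (if ?N x \<le> r then f x else 0)" for x
  have NL[measurable]: "?N \<in> borel_measurable lebesgue"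
    using cb.N_borel by (intro measurable_completion) simp
  have f'_meas: "f' \<in> borel_measurable lebesgue"
    unfolding f'_def using f_meas by measurable
  obtain g0 where g0: "g0 \<in> borel_measurable lborel" "AE x in lborel. f' x = g0 x"
    using completion_ex_borel_measurable_real[OF f'_meas] by blast
  define g where "g x = (if ?N x \<le> r then g0 x else 0)" for x
  have g_meas: "g \<in> borel_measurable borel" unfolding g_def using g0(1) cb.N_borel by measurable
  have ae1: "AE x in lborel. f x = f' x"
    using supp unfolding rK AE_completion_iff f'_def by eventually_elim auto
  have ae: "AE x in lborel. f x = g x"
    using ae1 g0(2) by eventually_elim (auto simp: g_def f'_def split: if_splits)
  obtain Z where Z: "{x \<in> space lborel. \<not> f x = g x} \<subseteq> Z" "Z \<in> null_sets lborel"
    using ae by (elim AE_E) (auto simp: null_sets_def)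
  have aeL: "AE x in lebesgue. f x = g x" using ae by (simp add: AE_completion_iff)
  have gp_meas: "(\<lambda>x. \<bar>g x\<bar> powr p) \<in> borel_measurable lborel" using g_meas by measurable
  have gpL: "(\<lambda>x. \<bar>g x\<bar> powr p) \<in> borel_measurable lebesgue"
    by (rule measurable_completion[OF gp_meas])
  have int_eq: "(\<integral>x. \<bar>f x\<bar> powr p \<partial>lebesgue) = (\<integral>x. \<bar>g x\<bar> powr p \<partial>lborel)"
  proof -
    have "(\<integral>x. \<bar>f x\<bar> powr p \<partial>lebesgue) = (\<integral>x. \<bar>g x\<bar> powr p \<partial>lebesgue)"
      by (rule integral_cong_AE) (use f_meas gpL aeL in auto)
    also have "\<dots> = (\<integral>x. \<bar>g x\<bar> powr p \<partial>lborel)" by (rule integral_completion[OF gp_meas])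
    finally show ?thesis .
  qed
  have g_int: "integrable lborel (\<lambda>x. \<bar>g x\<bar> powr p)"
  proof -
    have "integrable lebesgue (\<lambda>x. \<bar>g x\<bar> powr p)"
      using f_Lp by (rule integrable_cong_AE_imp) (use gpL aeL in auto)
    then show ?thesis using integrable_completion[OF gp_meas] by simp
  qed
  interpret ms: msetup K \<delta> R g r p lam "real DIM('a) / p"
    using sK g_meas r p lam g_int
    by unfold_locales (auto simp: g_def)
  let ?Z2 = "Z \<times> UNIV \<union> UNIV \<times> Z"
  have Z2: "?Z2 \<in> null_sets (lborel \<Otimes>\<^sub>M lborel)"
    using Z(2) by (intro null_sets.Un) auto
  have fg: "f x = g x \<and> f y = g y" if "(x, y) \<notin> ?Z2" for x y
    using that Z(1) by auto
  define Hf where "Hf = {(x, y). mink_norm K y > mink_norm K x \<and>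
                  \<bar>f x - f y\<bar> / mink_norm K (x - y) powr (real DIM('a) / p) \<ge> lam}"
  define Ef where "Ef = {(x, y). x \<noteq> y \<and>
                  \<bar>f x - f y\<bar> * mink_norm K (x - y) powr (- (real DIM('a) / p)) \<ge> lam}"
  have HfH: "emeasure (lebesgue :: ('a \<times> 'a) measure) Hf = emeasure (lborel \<Otimes>\<^sub>M lborel) ms.H"
  proof (rule transfer_meas[OF ms.H_meas Z2])
    fix z assume "z \<notin> ?Z2"
    then show "z \<in> Hf \<longleftrightarrow> z \<in> ms.H" using fg by (cases z) (auto simp: Hf_def ms.H_def ms.cnd_def)
  qed
  have EfE: "emeasure (lebesgue :: ('a \<times> 'a) measure) Ef = emeasure (lborel \<Otimes>\<^sub>M lborel) ms.E"
  proof (rule transfer_meas[OF ms.E_meas Z2])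
    fix z assume z: "z \<notin> ?Z2"
    obtain x y where xy: "z = (x, y)" by (cases z)
    show "z \<in> Ef \<longleftrightarrow> z \<in> ms.E"
    proof (cases "x = y")
      case True then show ?thesis using xy lam by (simp add: Ef_def ms.E_def ms.cnd_def cb.N0)
    next
      case False
      then have "?N (x - y) > 0" using cb.N_pos by simp
      then show ?thesis using xy z fg[of x y] False
        by (simp add: Ef_def ms.E_def ms.cnd_def powr_minus_divide)
    qed
  qed
  have HL: "emeasure (lborel \<Otimes>\<^sub>M lborel) ms.H = emeasure lborel ms.H" by (simp add: lborel_prod)
  have c1: "measure lebesgue K / lam powr p * (\<integral>x. \<bar>f x\<bar> powr p \<partial>lebesgue) = ms.cc * ms.I"
    by (simp add: int_eq cb.kap_leb)
  have c2: "(measure lebesgue K)\<^sup>2 * r ^ (2 * DIM('a)) = ms.B * ms.B"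
    by (simp add: cb.kap_leb power2_eq_square power_mult_distrib power_mult)
  show ?thesis
    unfolding Hf_def[symmetric] Ef_def[symmetric] HfH EfE c1 c2 HL
    using ms.H_lower ms.H_upper ms.E_2H by (simp add: lborel_prod)
qed



end
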